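(* Let $f:X\to Y$ be a continuous map between metric spaces, let $q:[a,b]\to X$ be a continuous path, and suppose that $p=f\circ q$ is rectifiable. Then: (1) if $q(a)\ne q(b)$, there exists $\tau\in[a,b]$ such that $\ell(p)\ge D^-_{q(\tau)}f\cdot d(q(a),q(b))$; (2) if $0<\inf_{x\in\operatorname{Im}q}D_x^-f<\infty$, then $\ell(p)\ge \inf_{x\in\operatorname{Im}q}D_x^-f\cdot\ell(q)$.
   Context: The length of a path $q:[a,b]\to X$ in a metric space is $\ell(q)=\sup\sum_{i=0}^{n-1}d(q(t_i),q(t_{i+1}))$ over all partitions $a=t_0\le\dots\le t_n=b$ (possibly $+\infty$); $q$ is rectifiable if $\ell(q)<\infty$. For a continuous map $f:X\to Y$ and a non-isolated point $x\in X$, $D_x^-f=\liminf_{z\to x,\,z\neq x}\frac{d(f(z),f(x))}{d(z,x)}\in[0,\infty]$. It is assumed that $X$ has no isolated points. *)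

theory Defs
  imports "HOL-Analysis.Analysis" "HOL-Library.Extended_Real"
begin

definition path_length :: "(real \<Rightarrow> 'a::metric_space) \<Rightarrow> real \<Rightarrow> real \<Rightarrow> ereal" where
  "path_length q a b =
     (SUP nt \<in> {(n, t). t 0 = a \<and> t n = b \<and> (\<forall>i<n. t i \<le> t (Suc i))}.
        ereal (\<Sum>i<fst nt. dist (q (snd nt i)) (q (snd nt (Suc i)))))"

definition lower_deriv :: "('a::metric_space \<Rightarrow> 'b::metric_space) \<Rightarrow> 'a \<Rightarrow> ereal" where
  "lower_deriv f x = Liminf (at x) (\<lambda>z. ereal (dist (f z) (f x) / dist z x))"

end

theory Submission
  imports Defs
begin

definition Parts :: "real \<Rightarrow> real \<Rightarrow> (nat \<times> (nat \<Rightarrow> real)) set" where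
  "Parts x y = {(n, t). t 0 = x \<and> t n = y \<and> (\<forall>i<n. t i \<le> t (Suc i))}"

lemma pl_alt: "path_length p x y = (SUP nt \<in> Parts x y.
        ereal (\<Sum>i<fst nt. dist (p (snd nt i)) (p (snd nt (Suc i)))))"
  unfolding path_length_def Parts_def by simp

lemma pl_dist:
  assumes "x \<le> y"
  shows "ereal (dist (p x) (p y)) \<le> path_length p x y"
proof -
  let ?t = "\<lambda>i::nat. if i = 0 then x else y"
  have "(1, ?t) \<in> Parts x y" using assms by (auto simp: Parts_def)
  then have "ereal (\<Sum>i<fst (1::nat, ?t). dist (p (snd (1::nat, ?t) i)) (p (snd (1::nat, ?t) (Suc i))))
     \<le> path_length p x y"
    unfolding pl_alt by (rule SUP_upper)
  then show ?thesis by simp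
qed

lemma pl_nonneg: "x \<le> y \<Longrightarrow> 0 \<le> path_length p x y"
  by (rule order_trans[OF _ pl_dist]) auto

lemma sum_split_nat: "(\<Sum>i<n+m. h i) = (\<Sum>i<n. h i) + (\<Sum>j<m. h (n + j))"
  for h :: "nat \<Rightarrow> real"
  by (induction m) auto

lemma pl_superadd:
  assumes xy: "x \<le> y" and yz: "y \<le> z"
  shows "path_length p x y + path_length p y z \<le> path_length p x z"
proof -
  define S where "S = (\<lambda>nt::nat \<times> (nat \<Rightarrow> real). ereal (\<Sum>i<fst nt. dist (p (snd nt i)) (p (snd nt (Suc i)))))"
  have key: "S P1 + S P2 \<le> path_length p x z" if P1: "P1 \<in> Parts x y" and P2: "P2 \<in> Parts y z" for P1 P2
  proof -
    obtain n t where P1e: "P1 = (n, t)" by (cases P1)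
    obtain m s where P2e: "P2 = (m, s)" by (cases P2)
    have t: "t 0 = x" "t n = y" "\<forall>i<n. t i \<le> t (Suc i)" using P1 P1e by (auto simp: Parts_def)
    have s: "s 0 = y" "s m = z" "\<forall>i<m. s i \<le> s (Suc i)" using P2 P2e by (auto simp: Parts_def)
    define u where "u = (\<lambda>i. if i \<le> n then t i else s (i - n))"
    have u_shift: "u (n + j) = s j" for j
      using t(2) s(1) by (auto simp: u_def)
    have "(n + m, u) \<in> Parts x z"
      unfolding Parts_def
    proof (clarsimp, intro conjI allI impI)
      show "u 0 = x" using t by (simp add: u_def)
      show "u (n + m) = z" using u_shift[of m] s by simp
      fix i assume i: "i < n + m"
      show "u i \<le> u (Suc i)"
      proof (cases "Suc i \<le> n")
        case True then show ?thesis using t(3) by (simp add: u_def)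
      next
        case False
        then obtain j where j: "i = n + j" "j < m" using i by (metis add_less_imp_less_left le_Suc_ex not_less_eq_eq)
        then show ?thesis using u_shift[of j] u_shift[of "Suc j"] s(3) by simp
      qed
    qed
    then have "S (n + m, u) \<le> path_length p x z" unfolding pl_alt S_def by (rule SUP_upper)
    moreover have "S (n + m, u) = S P1 + S P2"
    proof -
      have "(\<Sum>i<n+m. dist (p (u i)) (p (u (Suc i)))) =
          (\<Sum>i<n. dist (p (u i)) (p (u (Suc i)))) + (\<Sum>j<m. dist (p (u (n+j))) (p (u (Suc (n+j)))))"
        by (rule sum_split_nat)
      moreover have "(\<Sum>i<n. dist (p (u i)) (p (u (Suc i)))) = (\<Sum>i<n. dist (p (t i)) (p (t (Suc i))))"
        by (rule sum.cong) (auto simp: u_def)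
      moreover have "(\<Sum>j<m. dist (p (u (n+j))) (p (u (Suc (n+j))))) = (\<Sum>j<m. dist (p (s j)) (p (s (Suc j))))"
        using u_shift by (metis add_Suc_right)
      ultimately show ?thesis by (simp add: S_def P1e P2e)
    qed
    ultimately show ?thesis by simp
  qed
  have ne1: "Parts x y \<noteq> {}" and ne2: "Parts y z \<noteq> {}"
    using xy yz by (auto simp: Parts_def intro!: exI[of _ 1] exI[of _ "\<lambda>i. if i = 0 then _ else _"])
  have S_nonneg: "0 \<le> S P" for P by (simp add: S_def sum_nonneg)
  have "(SUP P1\<in>Parts x y. S P1) + S P2 \<le> path_length p x z" if P2: "P2 \<in> Parts y z" for P2
  proof -
    have "(SUP P1\<in>Parts x y. S P1 + S P2) \<le> path_length p x z"
      using key P2 by (intro SUP_least) auto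
    then show ?thesis using SUP_ereal_add_left[OF ne1, of "S P2" S] S_nonneg[of P2] by simp
  qed
  then have "(SUP P2\<in>Parts y z. (SUP P1\<in>Parts x y. S P1) + S P2) \<le> path_length p x z"
    by (intro SUP_least) auto
  moreover have "(SUP P1\<in>Parts x y. S P1) \<noteq> -\<infinity>"
  proof -
    obtain P where "P \<in> Parts x y" using ne1 by blast
    then have "S P \<le> (SUP P1\<in>Parts x y. S P1)" by (rule SUP_upper)
    then show ?thesis using S_nonneg[of P] by auto
  qed
  ultimately have "(SUP P1\<in>Parts x y. S P1) + (SUP P2\<in>Parts y z. S P2) \<le> path_length p x z"
    using SUP_ereal_add_right[OF ne2, of "(SUP P1\<in>Parts x y. S P1)" S] by simp
  then show ?thesis unfolding pl_alt S_def .
qed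


lemma pl_fin:
  assumes "a \<le> x" "x \<le> y" "y \<le> b" "path_length p a b < \<infinity>"
  shows "path_length p x y = ereal (real_of_ereal (path_length p x y))"
    and "0 \<le> real_of_ereal (path_length p x y)"
proof -
  have 1: "path_length p a x + path_length p x y \<le> path_length p a y"
    using assms by (intro pl_superadd) auto
  have 2: "path_length p a y + path_length p y b \<le> path_length p a b"
    using assms by (intro pl_superadd) auto
  have n1: "0 \<le> path_length p a x" "0 \<le> path_length p y b" "0 \<le> path_length p x y"
    using assms by (auto intro!: pl_nonneg)
  have "path_length p x y \<le> path_length p a x + path_length p x y"
    by (rule add_increasing[OF n1(1) order_refl])
  also have "\<dots> \<le> path_length p a y" by (rule 1)
  also have "path_length p a y \<le> path_length p a y + path_length p y b"
    by (rule add_increasing2[OF n1(2) order_refl])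
  also have "\<dots> \<le> path_length p a b" by (rule 2)
  finally have "path_length p x y < \<infinity>" using assms(4) by (rule le_less_trans)
  then show "path_length p x y = ereal (real_of_ereal (path_length p x y))"
    using n1 by (simp add: ereal_real)
  then show "0 \<le> real_of_ereal (path_length p x y)"
    using n1 by (simp add: real_of_ereal_pos)
qed

lemma PL_sup:
  assumes "a \<le> x" "x \<le> y" "y \<le> z" "z \<le> b" "path_length p a b < \<infinity>"
  shows "real_of_ereal (path_length p x y) + real_of_ereal (path_length p y z)
    \<le> real_of_ereal (path_length p x z)"
proof -
  have e1: "path_length p x y = ereal (real_of_ereal (path_length p x y))"
    using assms by (intro pl_fin(1)[of a _ _ b]) auto
  have e2: "path_length p y z = ereal (real_of_ereal (path_length p y z))"
    using assms by (intro pl_fin(1)[of a _ _ b]) auto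
  have e3: "path_length p x z = ereal (real_of_ereal (path_length p x z))"
    using assms by (intro pl_fin(1)[of a _ _ b]) auto
  have "path_length p x y + path_length p y z \<le> path_length p x z"
    using assms by (intro pl_superadd) auto
  moreover obtain r1 where r1: "path_length p x y = ereal r1" by (rule that[OF e1])
  moreover obtain r2 where r2: "path_length p y z = ereal r2" by (rule that[OF e2])
  moreover obtain r3 where r3: "path_length p x z = ereal r3" by (rule that[OF e3])
  ultimately show ?thesis by simp
qed

lemma PL_dist:
  assumes "a \<le> x" "x \<le> y" "y \<le> b" "path_length p a b < \<infinity>"
  shows "dist (p x) (p y) \<le> real_of_ereal (path_length p x y)"
proof -
  have e1: "path_length p x y = ereal (real_of_ereal (path_length p x y))"
    using assms by (intro pl_fin(1)[of a _ _ b]) auto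
  obtain r1 where r1: "path_length p x y = ereal r1" by (rule that[OF e1])
  show ?thesis using pl_dist[of x y p] assms r1 by simp
qed

lemma mono_local:
  fixes g :: "real \<Rightarrow> real"
  assumes xy: "x \<le> y"
    and loc: "\<forall>t\<in>{x..y}. \<exists>\<delta>>0. \<forall>s\<in>{x..y}. (t < s \<and> s < t + \<delta> \<longrightarrow> g t \<le> g s)
                 \<and> (t - \<delta> < s \<and> s < t \<longrightarrow> g s \<le> g t)"
  shows "g x \<le> g y"
proof -
  define S where "S = {s \<in> {x..y}. \<forall>u\<in>{x..s}. g x \<le> g u}"
  have xS: "x \<in> S" using xy by (auto simp: S_def)
  have bdd: "bdd_above S" by (rule bdd_aboveI[of _ y]) (auto simp: S_def)
  define m where "m = Sup S"
  have xm: "x \<le> m" using cSup_upper[OF xS bdd] m_def by simp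
  have my: "m \<le> y" unfolding m_def using xS by (intro cSup_least) (auto simp: S_def)
  have A: "g x \<le> g u" if uu: "x \<le> u" "u < m" for u
  proof -
    have "\<exists>s\<in>S. u < s" using less_cSup_iff[of S u] xS bdd uu m_def by auto
    then obtain s where "s \<in> S" "u < s" by blast
    then show ?thesis using uu by (auto simp: S_def)
  qed
  have B: "g x \<le> g m"
  proof (cases "m = x")
    case True then show ?thesis by simp
  next
    case False
    then have "x < m" using xm by simp
    obtain \<delta> where \<delta>: "\<delta> > 0" "\<forall>s\<in>{x..y}. (m < s \<and> s < m + \<delta> \<longrightarrow> g m \<le> g s) \<and> (m - \<delta> < s \<and> s < m \<longrightarrow> g s \<le> g m)"
      using bspec[OF loc, of m] xm my by (meson atLeastAtMost_iff)
    define u where "u = max x (m - \<delta>/2)"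
    have u1: "x \<le> u" "u < m" "m - \<delta> < u" "u \<in> {x..y}" using \<open>x<m\<close> \<delta>(1) my by (auto simp: u_def)
    have "g u \<le> g m" using bspec[OF \<delta>(2) u1(4)] u1 by blast
    then show ?thesis using A[of u] u1 by linarith
  qed
  have mS: "m \<in> S"
  proof -
    have "\<forall>u\<in>{x..m}. g x \<le> g u"
    proof
      fix u assume "u \<in> {x..m}"
      then have "x \<le> u" "u < m \<or> u = m" by auto
      then show "g x \<le> g u" using A B by auto
    qed
    then show ?thesis using xm my by (auto simp: S_def)
  qed
  have "m = y"
  proof (rule ccontr)
    assume "m \<noteq> y" then have "m < y" using my by simp
    obtain \<delta> where \<delta>: "\<delta> > 0" "\<forall>s\<in>{x..y}. (m < s \<and> s < m + \<delta> \<longrightarrow> g m \<le> g s) \<and> (m - \<delta> < s \<and> s < m \<longrightarrow> g s \<le> g m)"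
      using bspec[OF loc, of m] xm my by (meson atLeastAtMost_iff)
    define s' where "s' = min y (m + \<delta>/2)"
    have s': "m < s'" "s' < m + \<delta>" "s' \<le> y" using \<open>m<y\<close> \<delta>(1) by (auto simp: s'_def)
    have "\<forall>u\<in>{x..s'}. g x \<le> g u"
    proof
      fix u assume u: "u \<in> {x..s'}"
      show "g x \<le> g u"
      proof (cases "u \<le> m")
        case True then show ?thesis using mS u by (auto simp: S_def)
      next
        case False
        have "u \<in> {x..y}" using u s' by auto
        then have "g m \<le> g u" using bspec[OF \<delta>(2), of u] u s' False by auto
        then show ?thesis using B by simp
      qed
    qed
    then have "s' \<in> S" using s' xm by (auto simp: S_def)
    then have "s' \<le> m" unfolding m_def using bdd by (rule cSup_upper)
    then show False using s' by simp
  qed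
  then show ?thesis using mS xy by (auto simp: S_def)
qed


lemma mono_local_sub:
  fixes g :: "real \<Rightarrow> real"
  assumes loc: "\<forall>t\<in>{x..y}. \<exists>\<delta>>0. \<forall>s\<in>{x..y}. (t < s \<and> s < t + \<delta> \<longrightarrow> g t \<le> g s)
                 \<and> (t - \<delta> < s \<and> s < t \<longrightarrow> g s \<le> g t)"
    and uv: "x \<le> u" "u \<le> v" "v \<le> y"
  shows "g u \<le> g v"
proof (rule mono_local[OF uv(2)], intro ballI)
  fix t assume t: "t \<in> {u..v}"
  then have "t \<in> {x..y}" using uv by auto
  then obtain \<delta> where \<delta>: "\<delta> > 0" "\<forall>s\<in>{x..y}. (t < s \<and> s < t + \<delta> \<longrightarrow> g t \<le> g s)
                 \<and> (t - \<delta> < s \<and> s < t \<longrightarrow> g s \<le> g t)" using loc by blast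
  have "\<forall>s\<in>{u..v}. (t < s \<and> s < t + \<delta> \<longrightarrow> g t \<le> g s) \<and> (t - \<delta> < s \<and> s < t \<longrightarrow> g s \<le> g t)"
  proof
    fix s assume "s \<in> {u..v}"
    then have "s \<in> {x..y}" using uv by auto
    then show "(t < s \<and> s < t + \<delta> \<longrightarrow> g t \<le> g s) \<and> (t - \<delta> < s \<and> s < t \<longrightarrow> g s \<le> g t)"
      using \<delta>(2) by blast
  qed
  then show "\<exists>\<delta>>0. \<forall>s\<in>{u..v}. (t < s \<and> s < t + \<delta> \<longrightarrow> g t \<le> g s) \<and> (t - \<delta> < s \<and> s < t \<longrightarrow> g s \<le> g t)"
    using \<delta>(1) by blast
qed

lemma core:
  fixes f :: "'a::metric_space \<Rightarrow> 'b::metric_space" and q :: "real \<Rightarrow> 'a"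
  assumes contq: "continuous_on {x..y} q" and xy: "x \<le> y"
    and fin: "path_length (f \<circ> q) x y < \<infinity>" and L0: "0 \<le> L"
    and D: "\<forall>\<tau>\<in>{x..y}. ereal L < lower_deriv f (q \<tau>)"
  shows "L * dist (q x) (q y) \<le> real_of_ereal (path_length (f \<circ> q) x y)"
    and "q x \<noteq> q y \<Longrightarrow> L * dist (q x) (q y) < real_of_ereal (path_length (f \<circ> q) x y)"
proof -
  define PL where "PL u v = real_of_ereal (path_length (f \<circ> q) u v)" for u v
  have sup: "PL u v + PL v w \<le> PL u w" if "x \<le> u" "u \<le> v" "v \<le> w" "w \<le> y" for u v w
    unfolding PL_def using PL_sup[of x u v w y "f \<circ> q"] that fin by simp
  have dd: "dist (f (q u)) (f (q v)) \<le> PL u v" if "x \<le> u" "u \<le> v" "v \<le> y" for u v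
    unfolding PL_def using PL_dist[of x u v y "f \<circ> q"] that fin by simp
  have PL0: "0 \<le> PL x x" unfolding PL_def using pl_fin(2)[of x x x y "f \<circ> q"] xy fin by simp
  define g where "g t = PL x t - L * dist (q x) (q t)" for t
  have loc: "\<exists>\<delta>>0. \<forall>s\<in>{x..y}. dist s t < \<delta> \<longrightarrow>
      (t < s \<longrightarrow> g t \<le> g s \<and> (q s \<noteq> q t \<longrightarrow> g t < g s)) \<and>
      (s < t \<longrightarrow> g s \<le> g t \<and> (q s \<noteq> q t \<longrightarrow> g s < g t))" if t: "t \<in> {x..y}" for t
  proof -
    have "eventually (\<lambda>z. ereal L < ereal (dist (f z) (f (q t)) / dist z (q t))) (at (q t))"
      using less_LiminfD[OF D[rule_format, OF t, unfolded lower_deriv_def]] .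
    then obtain e where e: "e > 0"
      "\<forall>z. z \<noteq> q t \<and> dist z (q t) < e \<longrightarrow> ereal L < ereal (dist (f z) (f (q t)) / dist z (q t))"
      unfolding eventually_at by auto
    have K: "L * dist z (q t) \<le> dist (f z) (f (q t)) \<and> (z \<noteq> q t \<longrightarrow> L * dist z (q t) < dist (f z) (f (q t)))"
      if z: "dist z (q t) < e" for z
    proof (cases "z = q t")
      case True then show ?thesis by simp
    next
      case False
      then have "L < dist (f z) (f (q t)) / dist z (q t)" using e(2) z by auto
      then have "L * dist z (q t) < dist (f z) (f (q t))"
        using False by (simp add: pos_less_divide_eq)
      then show ?thesis by simp
    qed
    obtain \<delta> where \<delta>: "\<delta> > 0" "\<forall>s\<in>{x..y}. dist s t < \<delta> \<longrightarrow> dist (q s) (q t) < e"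
      using contq t e(1) unfolding continuous_on_iff by blast
    show ?thesis
    proof (rule exI[of _ \<delta>], rule conjI[OF \<delta>(1)], intro ballI impI)
      fix s assume s: "s \<in> {x..y}" and ds: "dist s t < \<delta>"
      have Ks: "L * dist (q s) (q t) \<le> dist (f (q s)) (f (q t))"
        "q s \<noteq> q t \<longrightarrow> L * dist (q s) (q t) < dist (f (q s)) (f (q t))"
        using K[of "q s"] \<delta>(2) s ds by auto
      have R: "g t \<le> g s \<and> (q s \<noteq> q t \<longrightarrow> g t < g s)" if ts: "t < s"
      proof -
        have "PL x t + PL t s \<le> PL x s" using sup[of x t s] ts s t by auto
        moreover have "dist (f (q t)) (f (q s)) \<le> PL t s" using dd[of t s] ts s t by auto
        moreover have "L * dist (q x) (q s) \<le> L * dist (q x) (q t) + L * dist (q t) (q s)"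
          using mult_left_mono[OF dist_triangle[of "q x" "q s" "q t"] L0]
          by (simp add: distrib_left dist_commute)
        moreover note Ks
        ultimately show ?thesis
          unfolding g_def by (auto simp: dist_commute)
      qed
      have Lf: "g s \<le> g t \<and> (q s \<noteq> q t \<longrightarrow> g s < g t)" if ts: "s < t"
      proof -
        have "PL x s + PL s t \<le> PL x t" using sup[of x s t] ts s t by auto
        moreover have "dist (f (q s)) (f (q t)) \<le> PL s t" using dd[of s t] ts s t by auto
        moreover have "L * dist (q x) (q t) \<le> L * dist (q x) (q s) + L * dist (q s) (q t)"
          using mult_left_mono[OF dist_triangle[of "q x" "q t" "q s"] L0]
          by (simp add: distrib_left dist_commute)
        moreover note Ks
        ultimately show ?thesis
          unfolding g_def by (auto simp: dist_commute)
      qed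
      show "(t < s \<longrightarrow> g t \<le> g s \<and> (q s \<noteq> q t \<longrightarrow> g t < g s)) \<and>
      (s < t \<longrightarrow> g s \<le> g t \<and> (q s \<noteq> q t \<longrightarrow> g s < g t))" using R Lf by blast
    qed
  qed
  have loc2: "\<forall>t\<in>{x..y}. \<exists>\<delta>>0. \<forall>s\<in>{x..y}. (t < s \<and> s < t + \<delta> \<longrightarrow> g t \<le> g s)
                 \<and> (t - \<delta> < s \<and> s < t \<longrightarrow> g s \<le> g t)"
  proof
    fix t assume t: "t \<in> {x..y}"
    obtain \<delta> where \<delta>: "\<delta> > 0" "\<forall>s\<in>{x..y}. dist s t < \<delta> \<longrightarrow>
      (t < s \<longrightarrow> g t \<le> g s \<and> (q s \<noteq> q t \<longrightarrow> g t < g s)) \<and>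
      (s < t \<longrightarrow> g s \<le> g t \<and> (q s \<noteq> q t \<longrightarrow> g s < g t))" using loc[OF t] by blast
    show "\<exists>\<delta>>0. \<forall>s\<in>{x..y}. (t < s \<and> s < t + \<delta> \<longrightarrow> g t \<le> g s)
                 \<and> (t - \<delta> < s \<and> s < t \<longrightarrow> g s \<le> g t)"
    proof (rule exI[of _ \<delta>], intro conjI ballI impI)
      show "\<delta> > 0" by (rule \<delta>(1))
    next
      fix s assume s: "s \<in> {x..y}" and "t < s \<and> s < t + \<delta>"
      then have "dist s t < \<delta>" "t < s" by (auto simp: dist_real_def)
      then show "g t \<le> g s" using \<delta>(2) s by blast
    next
      fix s assume s: "s \<in> {x..y}" and "t - \<delta> < s \<and> s < t"
      then have "dist s t < \<delta>" "s < t" by (auto simp: dist_real_def)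
      then show "g s \<le> g t" using \<delta>(2) s by blast
    qed
  qed
  have gm: "g u \<le> g v" if "x \<le> u" "u \<le> v" "v \<le> y" for u v
    by (rule mono_local_sub[OF loc2 that])
  have gx: "g x = PL x x" by (simp add: g_def)
  show "L * dist (q x) (q y) \<le> real_of_ereal (path_length (f \<circ> q) x y)"
    using gm[of x y] xy gx PL0 unfolding g_def PL_def by simp
  assume ne: "q x \<noteq> q y"
  show "L * dist (q x) (q y) < real_of_ereal (path_length (f \<circ> q) x y)"
  proof (rule ccontr)
    assume "\<not> ?thesis"
    then have "g y \<le> g x" using gx PL0 unfolding g_def PL_def by simp
    then have gc: "g u = g x" if "u \<in> {x..y}" for u
      using gm[of x u] gm[of u y] that by fastforce
    define h where "h t = dist (q x) (q t)" for t
    have hl: "\<exists>\<delta>>0. \<forall>s\<in>{x..y}. dist s t < \<delta> \<longrightarrow> h s = h t" if t: "t \<in> {x..y}" for t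
    proof -
      obtain \<delta> where \<delta>: "\<delta> > 0" "\<forall>s\<in>{x..y}. dist s t < \<delta> \<longrightarrow>
        (t < s \<longrightarrow> g t \<le> g s \<and> (q s \<noteq> q t \<longrightarrow> g t < g s)) \<and>
        (s < t \<longrightarrow> g s \<le> g t \<and> (q s \<noteq> q t \<longrightarrow> g s < g t))" using loc[OF t] by blast
      have "q s = q t" if s: "s \<in> {x..y}" "dist s t < \<delta>" for s
      proof (rule ccontr)
        assume nq: "q s \<noteq> q t"
        have "g s = g t" using gc[OF s(1)] gc[OF t] by simp
        moreover have "s \<noteq> t" using nq by auto
        ultimately show False using \<delta>(2) s nq by (metis less_irrefl linorder_neqE_linordered_idom)
      qed
      then show ?thesis using \<delta>(1) unfolding h_def by auto
    qed
    have hloc: "\<forall>t\<in>{x..y}. \<exists>\<delta>>0. \<forall>s\<in>{x..y}. (t < s \<and> s < t + \<delta> \<longrightarrow> k t \<le> k s)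
                 \<and> (t - \<delta> < s \<and> s < t \<longrightarrow> k s \<le> k t)" if k: "k = h \<or> k = (\<lambda>t. - h t)" for k
    proof
      fix t assume t: "t \<in> {x..y}"
      obtain \<delta> where \<delta>: "\<delta> > 0" "\<forall>s\<in>{x..y}. dist s t < \<delta> \<longrightarrow> h s = h t" using hl[OF t] by blast
      have "\<forall>s\<in>{x..y}. (t < s \<and> s < t + \<delta> \<longrightarrow> k t \<le> k s) \<and> (t - \<delta> < s \<and> s < t \<longrightarrow> k s \<le> k t)"
      proof
        fix s assume s: "s \<in> {x..y}"
        have "(t < s \<and> s < t + \<delta>) \<or> (t - \<delta> < s \<and> s < t) \<longrightarrow> h s = h t"
          using \<delta>(2) s by (auto simp: dist_real_def)
        then show "(t < s \<and> s < t + \<delta> \<longrightarrow> k t \<le> k s) \<and> (t - \<delta> < s \<and> s < t \<longrightarrow> k s \<le> k t)"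
          using k by auto
      qed
      then show "\<exists>\<delta>>0. \<forall>s\<in>{x..y}. (t < s \<and> s < t + \<delta> \<longrightarrow> k t \<le> k s) \<and> (t - \<delta> < s \<and> s < t \<longrightarrow> k s \<le> k t)"
        using \<delta>(1) by blast
    qed
    have "h x \<le> h y" using mono_local[OF xy hloc[of h]] by simp
    moreover have "- h x \<le> - h y" using mono_local[OF xy hloc[of "\<lambda>t. - h t"]] by simp
    ultimately have "h y = h x" by simp
    then show False using ne unfolding h_def by simp
  qed
qed

theorem theorem3:
  fixes f :: "'a::metric_space \<Rightarrow> 'b::metric_space"
    and q :: "real \<Rightarrow> 'a" and a b :: real
  assumes no_isolated: "\<And>x::'a. x islimpt (UNIV :: 'a set)"
    and contf: "continuous_on UNIV f"
    and ab: "a \<le> b"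
    and contq: "continuous_on {a..b} q"
    and rect: "path_length (f \<circ> q) a b < \<infinity>"
  shows "(q a \<noteq> q b \<longrightarrow>
            (\<exists>\<tau>\<in>{a..b}. path_length (f \<circ> q) a b
                 \<ge> lower_deriv f (q \<tau>) * ereal (dist (q a) (q b))))
       \<and> (0 < (INF x\<in>q ` {a..b}. lower_deriv f x) \<and> (INF x\<in>q ` {a..b}. lower_deriv f x) < \<infinity>
          \<longrightarrow> path_length (f \<circ> q) a b
                \<ge> (INF x\<in>q ` {a..b}. lower_deriv f x) * path_length q a b)"
proof -
  define P where "P = real_of_ereal (path_length (f \<circ> q) a b)"
  have Pe: "path_length (f \<circ> q) a b = ereal P" and P0: "0 \<le> P"
    using pl_fin[of a a b b "f \<circ> q"] ab rect by (auto simp: P_def)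
  have part1: "q a \<noteq> q b \<longrightarrow> (\<exists>\<tau>\<in>{a..b}. path_length (f \<circ> q) a b
                 \<ge> lower_deriv f (q \<tau>) * ereal (dist (q a) (q b)))"
  proof
    assume ne: "q a \<noteq> q b"
    define d where "d = dist (q a) (q b)"
    have d0: "d > 0" using ne by (simp add: d_def)
    show "\<exists>\<tau>\<in>{a..b}. path_length (f \<circ> q) a b \<ge> lower_deriv f (q \<tau>) * ereal (dist (q a) (q b))"
    proof (rule ccontr)
      assume "\<not> (\<exists>\<tau>\<in>{a..b}. path_length (f \<circ> q) a b \<ge> lower_deriv f (q \<tau>) * ereal (dist (q a) (q b)))"
      then have lt: "\<forall>\<tau>\<in>{a..b}. ereal P < lower_deriv f (q \<tau>) * ereal d"
        by (auto simp: Pe d_def not_le)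
      have Dgt: "\<forall>\<tau>\<in>{a..b}. ereal (P / d) < lower_deriv f (q \<tau>)"
      proof
        fix \<tau> assume "\<tau> \<in> {a..b}"
        then have h: "ereal P < lower_deriv f (q \<tau>) * ereal d" using lt by blast
        show "ereal (P / d) < lower_deriv f (q \<tau>)"
        proof (cases "lower_deriv f (q \<tau>)")
          case (real r)
          then have "P < r * d" using h by simp
          then show ?thesis using real d0 by (simp add: pos_divide_less_eq)
        next
          case PInf then show ?thesis by simp
        next
          case MInf then show ?thesis using h d0 by simp
        qed
      qed
      have "P / d * d < P"
        using core(2)[OF contq ab rect _ Dgt] ne P0 d0 by (simp add: d_def P_def)
      then show False using d0 by simp
    qed
  qed
  define m where "m = (INF x\<in>q ` {a..b}. lower_deriv f x)"
  have part2: "0 < m \<and> m < \<infinity> \<longrightarrow> path_length (f \<circ> q) a b \<ge> m * path_length q a b"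
  proof
    assume "0 < m \<and> m < \<infinity>"
    then obtain mr where mr: "m = ereal mr" "0 < mr" by (cases m) auto
    have mD: "m \<le> lower_deriv f (q \<tau>)" if "\<tau> \<in> {a..b}" for \<tau>
      unfolding m_def using that by (auto intro: INF_lower)
    have key: "mr * (\<Sum>i<n. dist (q (t i)) (q (t (Suc i)))) \<le> P" if nt: "(n, t) \<in> Parts a b" for n t
    proof -
      from nt have t0: "t 0 = a" "t n = b" "\<forall>i<n. t i \<le> t (Suc i)" by (auto simp: Parts_def)
      have tmono: "t i \<le> t j" if "i \<le> j" "j \<le> n" for i j
        using that
      proof (induction j)
        case 0 then show ?case by simp
      next
        case (Suc j)
        show ?case
        proof (cases "i = Suc j")
          case True then show ?thesis by simp
        next
          case False
          then have "i \<le> j" using Suc.prems by simp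
          then have "t i \<le> t j" using Suc.IH Suc.prems by simp
          moreover have "t j \<le> t (Suc j)" using t0(3) Suc.prems by simp
          ultimately show ?thesis by linarith
        qed
      qed
      have tab: "t i \<in> {a..b}" if "i \<le> n" for i
        using tmono[of 0 i] tmono[of i n] that t0 by auto
      define \<sigma> where "\<sigma> = (\<Sum>i<n. dist (q (t i)) (q (t (Suc i))))"
      have \<sigma>0: "0 \<le> \<sigma>" by (simp add: \<sigma>_def sum_nonneg)
      have Lb: "L * \<sigma> \<le> P" if L: "0 < L" "L < mr" for L
      proof -
        have "\<forall>k\<le>n. L * (\<Sum>i<k. dist (q (t i)) (q (t (Suc i))))
              \<le> real_of_ereal (path_length (f \<circ> q) a (t k))"
        proof (intro allI impI)
          fix k assume "k \<le> n"
          then show "L * (\<Sum>i<k. dist (q (t i)) (q (t (Suc i))))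
              \<le> real_of_ereal (path_length (f \<circ> q) a (t k))"
          proof (induction k)
            case 0 show ?case using pl_fin(2)[of a a a b "f \<circ> q"] ab rect t0 by (simp del: comp_apply)
          next
            case (Suc k)
            then have k: "k \<le> n" "k < n" by auto
            have tk: "t k \<in> {a..b}" "t (Suc k) \<in> {a..b}" "t k \<le> t (Suc k)"
              using tab k t0(3) Suc.prems by auto
            have s1: "real_of_ereal (path_length (f \<circ> q) a (t k))
                + real_of_ereal (path_length (f \<circ> q) (t k) (t (Suc k)))
                \<le> real_of_ereal (path_length (f \<circ> q) a (t (Suc k)))"
              using PL_sup[of a a "t k" "t (Suc k)" b "f \<circ> q"] tk rect by auto
            obtain r where r: "path_length (f \<circ> q) (t k) (t (Suc k)) = ereal r"
              by (rule that[OF pl_fin(1)[of a "t k" "t (Suc k)" b "f \<circ> q"]]) (use tk rect in auto)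
            have fin': "path_length (f \<circ> q) (t k) (t (Suc k)) < \<infinity>" using r by simp
            have cq: "continuous_on {t k..t (Suc k)} q"
              by (rule continuous_on_subset[OF contq]) (use tk in auto)
            have Dk: "\<forall>\<tau>\<in>{t k..t (Suc k)}. ereal L < lower_deriv f (q \<tau>)"
            proof
              fix \<tau> assume "\<tau> \<in> {t k..t (Suc k)}"
              then have "\<tau> \<in> {a..b}" using tk by auto
              then have "m \<le> lower_deriv f (q \<tau>)" by (rule mD)
              moreover have "ereal L < m" using mr L by simp
              ultimately show "ereal L < lower_deriv f (q \<tau>)" by (rule less_le_trans[rotated])
            qed
            have c: "L * dist (q (t k)) (q (t (Suc k)))
                \<le> real_of_ereal (path_length (f \<circ> q) (t k) (t (Suc k)))"
              using core(1)[OF cq tk(3) fin' _ Dk] L by simp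
            show ?case using Suc.IH k(1) s1 c by (simp add: distrib_left o_def)
          qed
        qed
        then have "L * \<sigma> \<le> real_of_ereal (path_length (f \<circ> q) a (t n))"
          unfolding \<sigma>_def by blast
        then show ?thesis using t0(2) by (simp add: P_def)
      qed
      show ?thesis
      proof (cases "\<sigma> = 0")
        case True then show ?thesis using P0 by (simp add: \<sigma>_def)
      next
        case False
        then have \<sigma>p: "\<sigma> > 0" using \<sigma>0 by simp
        have "mr \<le> P / \<sigma>"
        proof (rule dense_le_bounded[of 0 mr])
          show "0 < mr" by (rule mr(2))
          fix w assume "0 < w" "w < mr"
          then show "w \<le> P / \<sigma>" using Lb[of w] \<sigma>p by (simp add: pos_le_divide_eq)
        qed
        then show ?thesis using \<sigma>p by (simp add: pos_le_divide_eq \<sigma>_def)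
      qed
    qed
    have ne: "Parts a b \<noteq> {}"
      using ab by (auto simp: Parts_def intro!: exI[of _ 1] exI[of _ "\<lambda>i. if i = 0 then _ else _"])
    have "m * path_length q a b = (SUP nt\<in>Parts a b. m * ereal (\<Sum>i<fst nt. dist (q (snd nt i)) (q (snd nt (Suc i)))))"
      unfolding pl_alt by (rule SUP_ereal_mult_left[symmetric, OF ne]) (use mr(2) in \<open>auto simp: mr(1) sum_nonneg\<close>)
    also have "\<dots> \<le> ereal P"
    proof (rule SUP_least)
      fix nt assume "nt \<in> Parts a b"
      then show "m * ereal (\<Sum>i<fst nt. dist (q (snd nt i)) (q (snd nt (Suc i)))) \<le> ereal P"
        using key[of "fst nt" "snd nt"] mr by simp
    qed
    finally show "path_length (f \<circ> q) a b \<ge> m * path_length q a b" using Pe by simp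
  qed
  show ?thesis using part1 part2 unfolding m_def by blast
qed

end
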